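(* Let $(X,\rho)$ be a metric space, $(A_k)\subset CL(X)$ and $A\in CL(X)$. Then the following statements are equivalent: (i) $(A_k)$ is Wijsman convergent to $A$; (ii) $(A_k)$ is $f$-Wijsman statistically convergent to $A$ for every unbounded modulus $f$; (iii) $(A_k)$ is $f$-Wijsman statistically convergent to $A$ for every unbounded, concave and slowly varying modulus $f$.
   Context: A modulus is a function $f\colon[0,\infty)\to[0,\infty)$ such that $f(x)=0$ iff $x=0$, $f$ is subadditive, increasing and continuous. A modulus $f$ is slowly varying if $\lim_{x\to\infty}\frac{f(ax)}{f(x)}=1$ for every $a>0$. $CL(X)$ denotes the set of all non-empty closed subsets of $(X,\rho)$, and $d(x,B)=\inf_{y\in B}\rho(x,y)$. $(A_k)$ is Wijsman convergent to $A$ if $d(x,A_k)\to d(x,A)$ for every $x\in X$. For an unbounded modulus $f$ and $K\subseteq\mathbb N$, the $f$-density is $d^f(K)=\lim_{n\to\infty}\frac{f(|\{k\le n:k\in K\}|)}{f(n)}$ (when the limit exists). A real sequence $(x_k)$ is $f$-statistically convergent to $l$ if for every $\varepsilon>0$ the set $\{k:|x_k-l|\ge\varepsilon\}$ has $f$-density $0$. $(A_k)$ is $f$-Wijsman statistically convergent to $A$ if for every $x\in X$ the sequence $(d(x,A_k))$ is $f$-statistically convergent to $d(x,A)$. *)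

theory Defs
  imports "HOL-Analysis.Analysis"
begin

definition modulus :: "(real \<Rightarrow> real) \<Rightarrow> bool" where
  "modulus f \<longleftrightarrow>
     (\<forall>x\<ge>0. f x \<ge> 0) \<and>
     (\<forall>x\<ge>0. f x = 0 \<longleftrightarrow> x = 0) \<and>
     (\<forall>x\<ge>0. \<forall>y\<ge>0. f (x + y) \<le> f x + f y) \<and>
     mono_on {0..} f \<and>
     continuous_on {0..} f"

definition unbounded_modulus :: "(real \<Rightarrow> real) \<Rightarrow> bool" where
  "unbounded_modulus f \<longleftrightarrow> modulus f \<and> (\<forall>M. \<exists>x\<ge>0. f x > M)"

definition slowly_varying :: "(real \<Rightarrow> real) \<Rightarrow> bool" where
  "slowly_varying f \<longleftrightarrow> (\<forall>a>0. ((\<lambda>x. f (a * x) / f x) \<longlongrightarrow> 1) at_top)"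

definition f_density_zero :: "(real \<Rightarrow> real) \<Rightarrow> nat set \<Rightarrow> bool" where
  "f_density_zero f K \<longleftrightarrow>
     ((\<lambda>n. f (real (card {k \<in> {1..n}. k \<in> K})) / f (real n)) \<longlonglongrightarrow> 0)"

definition f_stat_conv :: "(real \<Rightarrow> real) \<Rightarrow> (nat \<Rightarrow> real) \<Rightarrow> real \<Rightarrow> bool" where
  "f_stat_conv f x l \<longleftrightarrow> (\<forall>\<epsilon>>0. f_density_zero f {k. \<bar>x k - l\<bar> \<ge> \<epsilon>})"

definition CL :: "'a::metric_space set set" where
  "CL = {B. B \<noteq> {} \<and> closed B}"

definition wijsman_conv :: "(nat \<Rightarrow> 'a::metric_space set) \<Rightarrow> 'a set \<Rightarrow> bool" where
  "wijsman_conv As A \<longleftrightarrow> (\<forall>x. (\<lambda>k. infdist x (As k)) \<longlonglongrightarrow> infdist x A)"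

definition f_wijsman_stat_conv ::
  "(real \<Rightarrow> real) \<Rightarrow> (nat \<Rightarrow> 'a::metric_space set) \<Rightarrow> 'a set \<Rightarrow> bool" where
  "f_wijsman_stat_conv f As A \<longleftrightarrow> (\<forall>x. f_stat_conv f (\<lambda>k. infdist x (As k)) (infdist x A))"

end

theory Submission
  imports Defs
begin

definition fT :: "(nat \<Rightarrow> real) \<Rightarrow> real \<Rightarrow> real" where
  "fT T x = (\<Sum>i. min (x / T i) 1)"

locale dbl =
  fixes T :: "nat \<Rightarrow> real"
  assumes T0: "T 0 \<ge> 1" and TS: "\<And>i. 2 * T i \<le> T (Suc i)"
begin

lemma Tpow: "2 ^ i \<le> T i"
proof (induction i)
  case 0 then show ?case using T0 by simp
next
  case (Suc i) then show ?case using TS[of i] by simp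
qed

lemma Tpos: "T i > 0"
  using Tpow[of i] by (smt (verit) zero_less_power)

lemma Tmono: "i \<le> j \<Longrightarrow> T i \<le> T j"
  by (rule lift_Suc_mono_le[of T]) (use TS Tpos in \<open>smt (verit)\<close>)+

lemma term_bound: "\<bar>min (x / T i) 1\<bar> \<le> \<bar>x\<bar> * (1/2)^i"
proof -
  have p: "T i > 0" "2^i \<le> T i" using Tpos Tpow by auto
  have "\<bar>x\<bar> / T i \<le> \<bar>x\<bar> / 2^i"
    by (rule divide_left_mono) (use p in auto)
  moreover have "\<bar>min (x / T i) 1\<bar> \<le> \<bar>x\<bar> / T i"
    using p by (cases "x \<ge> 0") (auto simp: abs_if min_def divide_simps split: if_splits)
  ultimately show ?thesis by (simp add: power_one_over)
qed

lemma summ: "summable (\<lambda>i. min (x / T i) 1)"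
proof (rule summable_comparison_test)
  show "\<exists>N. \<forall>n\<ge>N. norm (min (x / T n) 1) \<le> \<bar>x\<bar> * (1/2)^n"
    using term_bound by auto
  show "summable (\<lambda>n. \<bar>x\<bar> * (1/2::real)^n)"
    by (intro summable_mult summable_geometric) auto
qed

lemma fT_nonneg: "x \<ge> 0 \<Longrightarrow> fT T x \<ge> 0"
  unfolding fT_def by (rule suminf_nonneg[OF summ]) (use Tpos in \<open>auto intro!: divide_nonneg_pos\<close>)

lemma fT_zero: "fT T 0 = 0"
  unfolding fT_def by simp

lemma fT_pos: "x > 0 \<Longrightarrow> fT T x > 0"
  unfolding fT_def
  by (rule suminf_pos2[OF summ, of _ 0]) (use Tpos in \<open>auto simp: min_def\<close>)

lemma fT_mono: "0 \<le> x \<Longrightarrow> x \<le> y \<Longrightarrow> fT T x \<le> fT T y"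
  unfolding fT_def
  by (rule suminf_le[OF _ summ summ]) (use Tpos in \<open>auto simp: min_def divide_right_mono\<close>)

lemma fT_subadd: "0 \<le> x \<Longrightarrow> 0 \<le> y \<Longrightarrow> fT T (x + y) \<le> fT T x + fT T y"
proof -
  assume xy: "0 \<le> x" "0 \<le> y"
  have "fT T x + fT T y = (\<Sum>i. min (x / T i) 1 + min (y / T i) 1)"
    unfolding fT_def by (rule suminf_add[OF summ summ])
  moreover have "fT T (x+y) \<le> (\<Sum>i. min (x / T i) 1 + min (y / T i) 1)"
    unfolding fT_def
  proof (rule suminf_le[OF _ summ summable_add[OF summ summ]])
    fix i
    have "T i > 0" by (rule Tpos)
    then show "min ((x + y) / T i) 1 \<le> min (x / T i) 1 + min (y / T i) 1"
      using xy by (auto simp: min_def field_simps)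
  qed
  ultimately show ?thesis by simp
qed

lemma fT_lip: "\<bar>fT T x - fT T y\<bar> \<le> 2 * \<bar>x - y\<bar>"
proof -
  have d: "fT T x - fT T y = (\<Sum>i. min (x / T i) 1 - min (y / T i) 1)"
    unfolding fT_def by (rule suminf_diff[OF summ summ])
  have g: "(\<Sum>i. \<bar>x - y\<bar> * (1/2::real)^i) = \<bar>x - y\<bar> * 2"
    by (subst suminf_mult) (auto simp: suminf_geometric)
  have gs: "summable (\<lambda>i. \<bar>x - y\<bar> * (1/2::real)^i)"
    by (intro summable_mult summable_geometric) auto
  have tb: "\<bar>min (x / T i) 1 - min (y / T i) 1\<bar> \<le> \<bar>x - y\<bar> * (1/2)^i" for i
  proof -
    have p: "T i > 0" "2^i \<le> T i" using Tpos Tpow by auto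
    have "\<bar>min (x / T i) 1 - min (y / T i) 1\<bar> \<le> \<bar>x / T i - y / T i\<bar>"
      by (auto simp: min_def abs_if)
    also have "\<dots> = \<bar>x - y\<bar> / T i" using p by (simp add: diff_divide_distrib[symmetric])
    also have "\<dots> \<le> \<bar>x - y\<bar> / 2^i"
      by (rule divide_left_mono) (use p in auto)
    finally show ?thesis by (simp add: power_one_over)
  qed
  have "fT T x - fT T y \<le> \<bar>x - y\<bar> * 2"
    unfolding d g[symmetric]
    by (rule suminf_le[OF _ summable_diff[OF summ summ] gs]) (use tb in \<open>auto simp: abs_le_iff\<close>)
  moreover have "-(fT T x - fT T y) \<le> \<bar>x - y\<bar> * 2"
    unfolding d g[symmetric] suminf_minus[OF summable_diff[OF summ summ], symmetric]
    by (rule suminf_le[OF _ summable_minus[OF summable_diff[OF summ summ]] gs]) (use tb in \<open>auto simp: abs_le_iff\<close>)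
  ultimately show ?thesis by auto
qed

lemma fT_cont: "continuous_on {0..} (fT T)"
proof (rule lipschitz_on_continuous_on)
  show "2-lipschitz_on {0..} (fT T)"
    unfolding lipschitz_on_def dist_real_def using fT_lip by auto
qed

lemma fT_concave: "concave_on {0..} (fT T)"
  unfolding concave_on_iff
proof (intro conjI ballI allI impI)
  show "convex {0::real..}" by (rule convex_real_interval)
  fix x y u v :: real
  assume xy: "x \<in> {0..}" "y \<in> {0..}" and uv: "0 \<le> u" "0 \<le> v" "u + v = 1"
  have "u * fT T x + v * fT T y = (\<Sum>i. u * min (x / T i) 1 + v * min (y / T i) 1)"
    unfolding fT_def
    by (subst suminf_add[OF summable_mult[OF summ] summable_mult[OF summ], symmetric])
       (simp add: suminf_mult[OF summ])
  also have "\<dots> \<le> fT T (u *\<^sub>R x + v *\<^sub>R y)"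
    unfolding fT_def
  proof (rule suminf_le[OF _ summable_add[OF summable_mult[OF summ] summable_mult[OF summ]] summ])
    fix i
    have p: "T i > 0" by (rule Tpos)
    have a: "u * min (x / T i) 1 + v * min (y / T i) 1 \<le> u * (x / T i) + v * (y / T i)"
      using uv by (intro add_mono mult_left_mono) auto
    have b: "u * min (x / T i) 1 + v * min (y / T i) 1 \<le> u * 1 + v * 1"
      using uv by (intro add_mono mult_left_mono) auto
    have "u * (x / T i) + v * (y / T i) = (u *\<^sub>R x + v *\<^sub>R y) / T i"
      by (simp add: add_divide_distrib)
    then show "u * min (x / T i) 1 + v * min (y / T i) 1 \<le> min ((u *\<^sub>R x + v *\<^sub>R y) / T i) 1"
      using a b uv by simp
  qed
  finally show "u * fT T x + v * fT T y \<le> fT T (u *\<^sub>R x + v *\<^sub>R y)" .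
qed

end

lemma unb_at_top:
  assumes "unbounded_modulus f"
  shows "filterlim f at_top at_top"
proof (subst filterlim_at_top, intro allI)
  fix Z
  obtain x where x: "x \<ge> 0" "f x > Z" using assms unfolding unbounded_modulus_def by auto
  have m: "mono_on {0..} f" using assms unfolding unbounded_modulus_def modulus_def by auto
  have "\<forall>y\<ge>x. Z \<le> f y"
  proof (intro allI impI)
    fix y assume "y \<ge> x"
    then have "f x \<le> f y" using m x by (auto intro: mono_onD)
    then show "Z \<le> f y" using x by simp
  qed
  then show "eventually (\<lambda>y. Z \<le> f y) at_top" unfolding eventually_at_top_linorder by blast
qed

context dbl
begin

definition B :: "real \<Rightarrow> nat \<Rightarrow> real" where
  "B x i = (if x < T i then x / T i else 0)"

lemma B_summ: "x \<ge> 0 \<Longrightarrow> summable (B x)"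
proof (rule summable_comparison_test)
  assume x: "x \<ge> 0"
  show "\<exists>N. \<forall>n\<ge>N. norm (B x n) \<le> \<bar>x\<bar> * (1/2)^n"
  proof (intro exI allI impI)
    fix n
    have "norm (B x n) \<le> \<bar>min (x / T n) 1\<bar>"
      using Tpos[of n] x by (auto simp: B_def min_def)
    then show "norm (B x n) \<le> \<bar>x\<bar> * (1/2)^n" using term_bound[of x n] by linarith
  qed
  show "summable (\<lambda>n. \<bar>x\<bar> * (1/2::real)^n)"
    by (intro summable_mult summable_geometric) auto
qed

lemma B_partial: "x \<ge> 0 \<Longrightarrow> (\<Sum>i<n. B x i) \<le> (if x < T n then 2 - 2 * x / T n else 0)"
proof (induction n)
  case 0 then show ?case using Tpos[of 0] by (auto simp: field_simps)
next
  case (Suc n)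
  have p: "T n > 0" "T (Suc n) > 0" "2 * T n \<le> T (Suc n)" using Tpos TS by auto
  show ?case
  proof (cases "x < T (Suc n)")
    case False
    then have "\<not> x < T n" using p by auto
    then show ?thesis using Suc False by (simp add: B_def)
  next
    case True
    show ?thesis
    proof (cases "x < T n")
      case True2: True
      have "2 * x / T (Suc n) \<le> x / T n"
        using p Suc.prems by (simp add: field_simps) (metis mult.commute mult_left_mono)
      then show ?thesis using Suc True True2 by (simp add: B_def)
    next
      case False
      have "x / T (Suc n) < 1" using True p by simp
      moreover have "(\<Sum>i<n. B x i) \<le> 0" using Suc.IH Suc.prems False by simp
      moreover have "B x n = 0" using False by (simp add: B_def)
      ultimately show ?thesis using True by simp
    qed
  qed
qed

lemma B_bound: "x \<ge> 0 \<Longrightarrow> suminf (B x) \<le> 2"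
proof (rule suminf_le_const[OF B_summ])
  fix n assume x: "x \<ge> 0"
  have "x / T n \<ge> 0" using x Tpos[of n] by simp
  then show "sum (B x) {..<n} \<le> 2" using B_partial[OF x, of n] by (auto split: if_splits)
qed

lemma B_nonneg: "x \<ge> 0 \<Longrightarrow> B x i \<ge> 0"
  using Tpos[of i] by (simp add: B_def)

lemma fT_stretch:
  assumes a: "a \<ge> 1" and x: "x \<ge> 0"
  shows "fT T (a * x) - fT T x \<le> 2 * (a - 1)"
proof -
  have "fT T (a * x) - fT T x = (\<Sum>i. min (a * x / T i) 1 - min (x / T i) 1)"
    unfolding fT_def by (rule suminf_diff[OF summ summ])
  also have "\<dots> \<le> (\<Sum>i. (a - 1) * B x i)"
  proof (rule suminf_le[OF _ summable_diff[OF summ summ] summable_mult[OF B_summ[OF x]]])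
    fix i
    have p: "T i > 0" by (rule Tpos)
    show "min (a * x / T i) 1 - min (x / T i) 1 \<le> (a - 1) * B x i"
    proof (cases "x < T i")
      case True
      then have "min (x / T i) 1 = x / T i" using p by simp
      moreover have "min (a * x / T i) 1 \<le> a * x / T i" by simp
      moreover have "x / T i + (a - 1) * (x / T i) = a * x / T i" using p by (simp add: field_simps)
      ultimately show ?thesis using True by (simp add: B_def)
    next
      case False
      then have "1 \<le> x / T i" using p by simp
      moreover have "x \<le> a * x" using mult_right_mono[OF a x] by simp
      then have "x / T i \<le> a * x / T i" using p by (intro divide_right_mono) auto
      ultimately show ?thesis using False by (simp add: B_def)
    qed
  qed
  also have "\<dots> = (a - 1) * suminf (B x)" by (rule suminf_mult[OF B_summ[OF x]])
  also have "\<dots> \<le> (a - 1) * 2" using B_bound[OF x] a by (intro mult_left_mono) auto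
  finally show ?thesis by simp
qed

lemma fT_scale:
  assumes a: "a > 0" and x: "x \<ge> 0"
  shows "\<bar>fT T (a * x) - fT T x\<bar> \<le> 2 * (a + 1 / a)"
proof (cases "a \<ge> 1")
  case True
  have "fT T x \<le> fT T (a * x)" using True x by (intro fT_mono) (auto simp: mult_le_cancel_right1)
  moreover have "1 / a > 0" using a by simp
  ultimately show ?thesis using fT_stretch[OF True x] by (smt (verit))
next
  case False
  have ia: "1 / a \<ge> 1" using False a by simp
  have ax: "a * x \<ge> 0" using a x by simp
  have "a * x \<le> 1 * x" using False x by (intro mult_right_mono) auto
  then have "fT T (a * x) \<le> fT T x" by (intro fT_mono[OF ax]) auto
  moreover have "fT T ((1/a) * (a * x)) - fT T (a * x) \<le> 2 * (1/a - 1)"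
    by (rule fT_stretch[OF ia ax])
  moreover have "(1/a) * (a * x) = x" using a by simp
  ultimately show ?thesis using a by (simp add: abs_if)
qed

lemma fT_big: "fT T (T m) \<ge> real m + 1"
proof -
  have "(\<Sum>i<Suc m. min (T m / T i) 1) = (\<Sum>i<Suc m. (1::real))"
  proof (rule sum.cong)
    fix i assume "i \<in> {..<Suc m}"
    then have "T i \<le> T m" by (intro Tmono) auto
    then show "min (T m / T i) 1 = 1" using Tpos[of i] by (simp add: min_def)
  qed simp
  also have "\<dots> = real m + 1" by simp
  finally have e: "(\<Sum>i<Suc m. min (T m / T i) 1) = real m + 1" .
  have "(\<Sum>i<Suc m. min (T m / T i) 1) \<le> fT T (T m)"
    unfolding fT_def
    by (rule sum_le_suminf[OF summ]) (use Tpos in \<open>auto intro!: divide_nonneg_pos less_imp_le\<close>)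
  then show ?thesis using e by simp
qed

lemma fT_unbounded: "unbounded_modulus (fT T)"
  unfolding unbounded_modulus_def modulus_def
proof (intro conjI allI impI)
  show "mono_on {0..} (fT T)" by (rule mono_onI) (auto intro: fT_mono)
  show "continuous_on {0..} (fT T)" by (rule fT_cont)
  fix M :: real
  have "real (nat \<lceil>M\<rceil>) + 1 > M" by linarith
  then show "\<exists>x\<ge>0. fT T x > M" using fT_big[of "nat \<lceil>M\<rceil>"] Tpos[of "nat \<lceil>M\<rceil>"]
    by (intro exI[of _ "T (nat \<lceil>M\<rceil>)"]) auto
qed (use fT_nonneg fT_zero fT_pos fT_subadd in \<open>auto simp: less_le\<close>)

lemma fT_slow: "slowly_varying (fT T)"
  unfolding slowly_varying_def
proof (intro allI impI)
  fix a :: real assume a: "a > 0"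
  have lim: "filterlim (fT T) at_top at_top" by (rule unb_at_top[OF fT_unbounded])
  have z: "((\<lambda>x. (fT T (a * x) - fT T x) / fT T x) \<longlongrightarrow> 0) at_top"
  proof (rule Lim_null_comparison)
    show "((\<lambda>x. 2 * (a + 1/a) / fT T x) \<longlongrightarrow> 0) at_top"
      by (rule tendsto_divide_0[OF tendsto_const filterlim_at_top_imp_at_infinity[OF lim]])
    show "eventually (\<lambda>x. norm ((fT T (a * x) - fT T x) / fT T x) \<le> 2 * (a + 1/a) / fT T x) at_top"
      unfolding eventually_at_top_linorder
    proof (intro exI[of _ 1] allI impI)
      fix x :: real assume "x \<ge> 1"
      then have x: "x \<ge> 0" "fT T x > 0" using fT_pos by auto
      then show "norm ((fT T (a * x) - fT T x) / fT T x) \<le> 2 * (a + 1/a) / fT T x"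
        using fT_scale[OF a x(1)] by (simp add: abs_divide divide_right_mono)
    qed
  qed
  have "((\<lambda>x. 1 + (fT T (a * x) - fT T x) / fT T x) \<longlongrightarrow> 1 + 0) at_top"
    by (intro tendsto_add tendsto_const z)
  then have l1: "((\<lambda>x. 1 + (fT T (a * x) - fT T x) / fT T x) \<longlongrightarrow> 1) at_top" by simp
  have ev: "eventually (\<lambda>x. 1 + (fT T (a * x) - fT T x) / fT T x = fT T (a * x) / fT T x) at_top"
  proof -
    show "eventually (\<lambda>x. 1 + (fT T (a * x) - fT T x) / fT T x = fT T (a * x) / fT T x) at_top"
      unfolding eventually_at_top_linorder
    proof (intro exI[of _ 1] allI impI)
      fix x :: real assume "x \<ge> 1"
      then have "fT T x > 0" using fT_pos by auto
      then show "1 + (fT T (a * x) - fT T x) / fT T x = fT T (a * x) / fT T x"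
        by (simp add: field_simps)
    qed
  qed
  show "((\<lambda>x. fT T (a * x) / fT T x) \<longlongrightarrow> 1) at_top"
    by (rule Lim_transform_eventually[OF l1 ev])
qed

lemma fT_upper:
  assumes N: "N \<ge> 0" "2 * N \<le> T (Suc m)"
  shows "fT T N \<le> real m + 3"
proof -
  define I where "I i = (if i \<le> m then (1::real) else 0)" for i
  have Is: "summable I" by (rule summable_finite[of "{..m}"]) (auto simp: I_def)
  have Isum: "suminf I = real m + 1"
    by (subst suminf_finite[of "{..m}"]) (auto simp: I_def)
  have "fT T N \<le> (\<Sum>i. I i + B N i)"
    unfolding fT_def
  proof (rule suminf_le[OF _ summ summable_add[OF Is B_summ[OF N(1)]]])
    fix i
    have p: "T i > 0" by (rule Tpos)
    show "min (N / T i) 1 \<le> I i + B N i"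
    proof (cases "i \<le> m")
      case True then show ?thesis using B_nonneg[OF N(1), of i] by (simp add: I_def)
    next
      case False
      then have "T (Suc m) \<le> T i" by (intro Tmono) auto
      then have "2 * N \<le> T i" using N by simp
      then show ?thesis using False p N by (cases "N < T i") (auto simp: I_def B_def)
    qed
  qed
  also have "\<dots> = suminf I + suminf (B N)" by (rule suminf_add[OF Is B_summ[OF N(1)], symmetric])
  also have "\<dots> \<le> real m + 3" using Isum B_bound[OF N(1)] by simp
  finally show ?thesis .
qed

end

primrec Tc :: "(real \<Rightarrow> nat) \<Rightarrow> nat \<Rightarrow> real" where
  "Tc g 0 = 1"
| "Tc g (Suc m) = 2 * max (Tc g m) (real (g (Tc g m)))"

lemma dbl_Tc: "dbl (Tc g)"
  by unfold_locales auto

lemma card_unbounded: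
  assumes "infinite (K :: nat set)"
  shows "\<exists>n. t \<le> real (card {k \<in> {1..n}. k \<in> K})"
proof -
  have "infinite (K - {0})" using assms by simp
  then obtain S where S: "finite S" "card S = nat \<lceil>t\<rceil>" "S \<subseteq> K - {0}"
    using infinite_arbitrarily_large by blast
  define n where "n = Max (insert 0 S)"
  have "S \<subseteq> {k \<in> {1..n}. k \<in> K}"
    using S by (auto simp: n_def)
  then have "card S \<le> card {k \<in> {1..n}. k \<in> K}" by (intro card_mono) auto
  then show ?thesis using S by (intro exI[of _ n]) linarith
qed

lemma card_le_n: "card {k \<in> {1..n}. k \<in> K} \<le> n"
proof -
  have "card {k \<in> {1..n}. k \<in> K} \<le> card {1..n}" by (intro card_mono) auto
  then show ?thesis by simp
qed

lemma finite_density: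
  assumes f: "unbounded_modulus f" and K: "finite K"
  shows "f_density_zero f K"
  unfolding f_density_zero_def
proof (rule Lim_null_comparison)
  have m: "mono_on {0..} f" and nn: "\<forall>x\<ge>0. f x \<ge> 0"
    using f unfolding unbounded_modulus_def modulus_def by auto
  have lim: "filterlim (\<lambda>n. f (real n)) at_top sequentially"
    by (rule filterlim_compose[OF unb_at_top[OF f] filterlim_real_sequentially])
  show "(\<lambda>n. f (real (card K)) / f (real n)) \<longlonglongrightarrow> 0"
    by (rule tendsto_divide_0[OF tendsto_const filterlim_at_top_imp_at_infinity[OF lim]])
  show "eventually (\<lambda>n. norm (f (real (card {k \<in> {1..n}. k \<in> K})) / f (real n))
        \<le> f (real (card K)) / f (real n)) sequentially"
  proof (rule always_eventually, intro allI)
    fix n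
    have "card {k \<in> {1..n}. k \<in> K} \<le> card K" using K by (intro card_mono) auto
    then have "f (real (card {k \<in> {1..n}. k \<in> K})) \<le> f (real (card K))"
      using m by (intro mono_onD[OF m]) auto
    moreover have "f (real (card {k \<in> {1..n}. k \<in> K})) \<ge> 0" using nn by auto
    moreover have "f (real n) \<ge> 0" using nn by auto
    ultimately show "norm (f (real (card {k \<in> {1..n}. k \<in> K})) / f (real n))
        \<le> f (real (card K)) / f (real n)"
      by (simp add: divide_right_mono)
  qed
qed

lemma infinite_counter:
  assumes K: "infinite (K :: nat set)"
  shows "\<exists>f. unbounded_modulus f \<and> concave_on {0..} f \<and> slowly_varying f \<and> \<not> f_density_zero f K"
proof -
  define c where "c n = card {k \<in> {1..n}. k \<in> K}" for n
  define g where "g t = (SOME n. t \<le> real (c n))" for t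
  have g: "t \<le> real (c (g t))" for t
    unfolding g_def c_def by (rule someI_ex) (rule card_unbounded[OF K])
  define T where "T = Tc g"
  interpret dbl T unfolding T_def by (rule dbl_Tc)
  have "\<not> f_density_zero (fT T) K"
  proof
    assume "f_density_zero (fT T) K"
    then have "(\<lambda>n. fT T (real (c n)) / fT T (real n)) \<longlonglongrightarrow> 0"
      unfolding f_density_zero_def c_def .
    from order_tendstoD(2)[OF this, of "1/3"]
    obtain n0 where n0: "\<And>n. n \<ge> n0 \<Longrightarrow> fT T (real (c n)) / fT T (real n) < 1/3"
      unfolding eventually_sequentially by auto
    define m where "m = n0"
    define N where "N = g (T m)"
    have cN: "T m \<le> real (c N)" unfolding N_def by (rule g)
    have "real m \<le> 2 ^ m"
      using less_exp[of m] by (metis of_nat_le_iff of_nat_numeral of_nat_power less_imp_le)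
    then have mT: "real m \<le> T m" using Tpow[of m] by linarith
    have "real (c N) \<le> real N" unfolding c_def using card_le_n by simp
    then have Nn0: "N \<ge> n0" using cN mT unfolding m_def by linarith
    have "fT T (T m) \<le> fT T (real (c N))" using cN Tpos[of m] by (intro fT_mono) auto
    then have lo: "real m + 1 \<le> fT T (real (c N))" using fT_big[of m] by linarith
    have "2 * real N \<le> T (Suc m)" unfolding T_def N_def by simp
    then have up: "fT T (real N) \<le> real m + 3" by (intro fT_upper) auto
    have "T m \<ge> 1" using Tpow[of m] by (smt (verit) one_le_power)
    then have "fT T (real N) > 0" using cN \<open>real (c N) \<le> real N\<close> by (intro fT_pos) linarith
    then have "fT T (real (c N)) / fT T (real N) \<ge> (real m + 1) / (real m + 3)"
      using lo up by (intro frac_le) auto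
    moreover have "(real m + 1) / (real m + 3) \<ge> 1/3" by (simp add: field_simps)
    ultimately show False using n0[OF Nn0] by linarith
  qed
  then show ?thesis using fT_unbounded fT_concave fT_slow by blast
qed


lemma wij_imp_all:
  assumes "wijsman_conv As A" "unbounded_modulus f"
  shows "f_wijsman_stat_conv f As A"
  unfolding f_wijsman_stat_conv_def f_stat_conv_def
proof (intro allI impI)
  fix x and e :: real assume e: "e > 0"
  have "(\<lambda>k. infdist x (As k)) \<longlonglongrightarrow> infdist x A" using assms(1) unfolding wijsman_conv_def by auto
  then obtain N where N: "\<And>k. k \<ge> N \<Longrightarrow> \<bar>infdist x (As k) - infdist x A\<bar> < e"
    using LIMSEQ_D[OF _ e] by (metis real_norm_def)
  have "{k. e \<le> \<bar>infdist x (As k) - infdist x A\<bar>} \<subseteq> {..<N}"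
    using N by (force simp: not_le[symmetric])
  then have "finite {k. e \<le> \<bar>infdist x (As k) - infdist x A\<bar>}" by (rule finite_subset) auto
  then show "f_density_zero f {k. e \<le> \<bar>infdist x (As k) - infdist x A\<bar>}"
    by (rule finite_density[OF assms(2)])
qed

lemma special_imp_wij:
  assumes "\<forall>f. unbounded_modulus f \<and> concave_on {0..} f \<and> slowly_varying f
                 \<longrightarrow> f_wijsman_stat_conv f As A"
  shows "wijsman_conv As A"
  unfolding wijsman_conv_def
proof (rule ccontr)
  assume "\<not> (\<forall>x. (\<lambda>k. infdist x (As k)) \<longlonglongrightarrow> infdist x A)"
  then obtain x where nx: "\<not> (\<lambda>k. infdist x (As k)) \<longlonglongrightarrow> infdist x A" by blast
  then obtain e :: real where e: "e > 0" and inf: "\<forall>N. \<exists>k\<ge>N. \<not> \<bar>infdist x (As k) - infdist x A\<bar> < e"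
    unfolding LIMSEQ_def dist_real_def by auto
  let ?K = "{k. e \<le> \<bar>infdist x (As k) - infdist x A\<bar>}"
  have "infinite ?K"
    unfolding infinite_nat_iff_unbounded_le using inf by (auto simp: not_less)
  then obtain f where f: "unbounded_modulus f" "concave_on {0..} f" "slowly_varying f"
    "\<not> f_density_zero f ?K" using infinite_counter by blast
  then have "f_wijsman_stat_conv f As A" using assms by blast
  then show False using f(4) e unfolding f_wijsman_stat_conv_def f_stat_conv_def by blast
qed

theorem theorem2p7:
  fixes As :: "nat \<Rightarrow> 'a::metric_space set" and A :: "'a set"
  assumes "\<And>k. As k \<in> CL" and "A \<in> CL"
  shows "(wijsman_conv As A \<longleftrightarrow>
            (\<forall>f. unbounded_modulus f \<longrightarrow> f_wijsman_stat_conv f As A))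
       \<and> (wijsman_conv As A \<longleftrightarrow>
            (\<forall>f. unbounded_modulus f \<and> concave_on {0..} f \<and> slowly_varying f
                 \<longrightarrow> f_wijsman_stat_conv f As A))"
  using wij_imp_all special_imp_wij by blast

end
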